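(* Let $(S,g)$ be a Damek--Ricci space and let $\xi$ be a (smooth) conformal vector field on $(S,g)$, i.e. $\mathcal{L}_\xi g = 2\rho g$ for some smooth function $\rho$ on $S$. Then the potential function $\rho$ vanishes identically; that is, $\xi$ is a Killing vector field.
   Context: A generalized Heisenberg algebra is a two-step nilpotent real Lie algebra $\mathfrak{n}=\mathfrak{v}\oplus\mathfrak{z}$ with an inner product $\langle\cdot,\cdot\rangle$, where $\mathfrak{z}$ is the center, $\mathfrak{v}$ is its orthogonal complement, $[\mathfrak{v},\mathfrak{v}]\subset\mathfrak{z}$, $[\mathfrak{v},\mathfrak{z}]=0$, and the maps $J_Z:\mathfrak{v}\to\mathfrak{v}$ ($Z\in\mathfrak{z}$) defined by $\langle J_ZV,W\rangle=\langle Z,[V,W]\rangle$ satisfy $J_Z^2=-\|Z\|^2\,\mathrm{Id}_{\mathfrak{v}}$ for all $Z\in\mathfrak{z}$. Given such $\mathfrak{n}$, let $\mathfrak{s}=\mathfrak{v}\oplus\mathfrak{z}\oplus\mathfrak{a}$ with $\mathfrak{a}=\mathbb{R}A$ and brackets extended by $[A,V]=\tfrac12 V$, $[A,Z]=Z$ for $V\in\mathfrak{v}$, $Z\in\mathfrak{z}$; equip $\mathfrak{s}$ with the inner product making $\mathfrak{v},\mathfrak{z},\mathfrak{a}$ mutually orthogonal, restricting to the given one on $\mathfrak{n}$, and with $\|A\|=1$. The Damek--Ricci space $S$ is the simply connected Lie group with Lie algebra $\mathfrak{s}$ endowed with the induced left-invariant Riemannian metric $g$. A smooth vector field $\xi$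 is conformal if $\mathcal{L}_\xi g=2\rho g$ for a smooth function $\rho$ (its potential function); it is Killing if $\rho\equiv0$. *)

theory Defs
  imports "HOL-Analysis.Analysis"
begin

text \<open>n = v (+) z, where v and z are finite-dimensional real inner product
spaces (types of class euclidean_space, hence of positive dimension) and the
Lie bracket on n is determined by a bilinear skew map br : v x v -> z
(brackets involving z vanish).  J_Z is defined by
<J_Z V, W> = <Z, [V,W]>, written out in an orthonormal basis of v.\<close>

definition heisJ :: "('v::euclidean_space \<Rightarrow> 'v \<Rightarrow> 'z::euclidean_space) \<Rightarrow> 'z \<Rightarrow> 'v \<Rightarrow> 'v" where
  "heisJ br Z V = (\<Sum>b\<in>Basis. (inner Z (br V b)) *\<^sub>R b)"

definition gen_heisenberg :: "('v::euclidean_space \<Rightarrow> 'v \<Rightarrow> 'z::euclidean_space) \<Rightarrow> bool" where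
  "gen_heisenberg br \<longleftrightarrow>
     bilinear br \<and> (\<forall>V W. br V W = - br W V) \<and>
     (\<forall>Z V. heisJ br Z (heisJ br Z V) = - ((norm Z)\<^sup>2) *\<^sub>R V)"

text \<open>S is realised as the manifold v x z x R, the point (V,Z,t) standing for
exp(V+Z) exp(tA).
Its Lie algebra is s = v (+) z (+) R A with [A,V] = V/2, [A,Z] = Z, and the
coordinate tangent space at the identity is identified with s.\<close>

definition dr_mult :: "('v::euclidean_space \<Rightarrow> 'v \<Rightarrow> 'z::euclidean_space)
     \<Rightarrow> 'v \<times> 'z \<times> real \<Rightarrow> 'v \<times> 'z \<times> real \<Rightarrow> 'v \<times> 'z \<times> real" where
  "dr_mult br p q = (case p of (V, Z, t) \<Rightarrow> case q of (V', Z', t') \<Rightarrow>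
      (V + exp (t/2) *\<^sub>R V', Z + exp t *\<^sub>R Z' + (exp (t/2) / 2) *\<^sub>R br V V', t + t'))"

definition dr_inv :: "'v::euclidean_space \<times> 'z::euclidean_space \<times> real \<Rightarrow> 'v \<times> 'z \<times> real" where
  "dr_inv p = (case p of (V, Z, t) \<Rightarrow> (- exp (-t/2) *\<^sub>R V, - exp (-t) *\<^sub>R Z, -t))"

definition s_inner :: "'v::euclidean_space \<times> 'z::euclidean_space \<times> real \<Rightarrow> 'v \<times> 'z \<times> real \<Rightarrow> real" where
  "s_inner u w = (case u of (a, b, s) \<Rightarrow> case w of (a', b', s') \<Rightarrow>
      inner a a' + inner b b' + s * s')"

definition dr_metric :: "('v::euclidean_space \<Rightarrow> 'v \<Rightarrow> 'z::euclidean_space)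
     \<Rightarrow> 'v \<times> 'z \<times> real \<Rightarrow> 'v \<times> 'z \<times> real \<Rightarrow> 'v \<times> 'z \<times> real \<Rightarrow> real" where
  "dr_metric br p u w =
     s_inner (frechet_derivative (dr_mult br (dr_inv p)) (at p) u)
             (frechet_derivative (dr_mult br (dr_inv p)) (at p) w)"

coinductive smooth_map :: "('a::euclidean_space \<Rightarrow> 'b::euclidean_space) \<Rightarrow> bool" where
  "(\<forall>x. f differentiable (at x)) \<Longrightarrow>
   (\<forall>d. smooth_map (\<lambda>x. frechet_derivative f (at x) d)) \<Longrightarrow> smooth_map f"

definition lie_deriv_metric ::
  "('a::euclidean_space \<Rightarrow> 'a \<Rightarrow> 'a \<Rightarrow> real) \<Rightarrow> ('a \<Rightarrow> 'a) \<Rightarrow> 'a \<Rightarrow> 'a \<Rightarrow> 'a \<Rightarrow> real" where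
  "lie_deriv_metric g \<xi> p u w =
     frechet_derivative (\<lambda>q. g q u w) (at p) (\<xi> p)
     + g p (frechet_derivative \<xi> (at p) u) w
     + g p u (frechet_derivative \<xi> (at p) w)"

end

theory Submission
  imports Defs
begin


lemma smooth_differentiable: "smooth_map f \<Longrightarrow> f differentiable (at x)"
  by (erule smooth_map.cases) auto

lemma smooth_deriv: "smooth_map f \<Longrightarrow> smooth_map (\<lambda>x. frechet_derivative f (at x) d)"
  by (erule smooth_map.cases) auto

lemma smooth_has_derivative: "smooth_map f \<Longrightarrow> (f has_derivative frechet_derivative f (at x)) (at x)"
  using smooth_differentiable frechet_derivative_works by blast

lemma smooth_const: "smooth_map (\<lambda>x. c)"
proof -
  have "\<And>f. (\<exists>c. f = (\<lambda>x. c)) \<Longrightarrow> smooth_map f"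
  proof (coinduction rule: smooth_map.coinduct)
    case (smooth_map f)
    then show ?case by auto
  qed
  then show ?thesis by blast
qed

lemma smooth_linear: "linear L \<Longrightarrow> smooth_map L"
proof (rule smooth_map.intros)
  assume "linear L"
  then have d: "\<And>x. (L has_derivative L) (at x)"
    by (simp add: linear_conv_bounded_linear bounded_linear_imp_has_derivative)
  then show "\<forall>x. L differentiable (at x)" using differentiableI by blast
  have "\<And>x. frechet_derivative L (at x) = L" using d frechet_derivative_at by metis
  then show "\<forall>d. smooth_map (\<lambda>x. frechet_derivative L (at x) d)" by (simp add: smooth_const)
qed

lemma smooth_comp_linear_aux:
  fixes g :: "'a::euclidean_space \<Rightarrow> 'c::euclidean_space"
  assumes "\<exists>(f::'a \<Rightarrow> 'b::euclidean_space) L. g = (\<lambda>x. L (f x)) \<and> smooth_map f \<and> linear L"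
  shows "smooth_map g"
  using assms
proof (coinduction arbitrary: g rule: smooth_map.coinduct)
  case (smooth_map g)
  then obtain f :: "'a \<Rightarrow> 'b" and L where g: "g = (\<lambda>x. L (f x))" and f: "smooth_map f" and L: "linear L" by blast
  have dL: "\<And>x. (L has_derivative L) (at x)"
    using L by (simp add: linear_conv_bounded_linear bounded_linear_imp_has_derivative)
  have dg: "\<And>x. (g has_derivative (\<lambda>d. L (frechet_derivative f (at x) d))) (at x)"
    unfolding g using diff_chain_at[OF smooth_has_derivative[OF f] dL] by (simp add: o_def)
  have fd: "\<And>x. frechet_derivative g (at x) = (\<lambda>d. L (frechet_derivative f (at x) d))"
    using dg frechet_derivative_at by metis
  have 1: "\<forall>x. g differentiable at x" using dg differentiableI by blast
  have 2: "\<forall>d. \<exists>(f'::'a \<Rightarrow> 'b) L. (\<lambda>x. frechet_derivative g (at x) d) = (\<lambda>x. L (f' x)) \<and> smooth_map f' \<and> linear L"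
    unfolding fd proof
    fix d show "\<exists>(f'::'a \<Rightarrow> 'b) La. (\<lambda>x. L (frechet_derivative f (at x) d)) = (\<lambda>x. La (f' x)) \<and> smooth_map f' \<and> linear La"
      by (intro exI[of _ "\<lambda>x. frechet_derivative f (at x) d"] exI[of _ L]) (simp add: smooth_deriv[OF f] L)
  qed
  show ?case using 1 2 by blast
qed

lemma smooth_comp_linear: "smooth_map f \<Longrightarrow> linear L \<Longrightarrow> smooth_map (\<lambda>x. L (f x))"
  by (rule smooth_comp_linear_aux) blast

definition sp :: "(('a \<Rightarrow> real) \<times> ('a \<Rightarrow> real)) list \<Rightarrow> 'a \<Rightarrow> real" where
  "sp l x = sum_list (map (\<lambda>p. fst p x * snd p x) l)"

lemma sp_simps [simp]: "sp [] x = 0" "sp (p#l) x = fst p x * snd p x + sp l x"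
  by (simp_all add: sp_def)

definition spd :: "(('a::euclidean_space \<Rightarrow> real) \<times> ('a \<Rightarrow> real)) list \<Rightarrow> 'a \<Rightarrow> (('a \<Rightarrow> real) \<times> ('a \<Rightarrow> real)) list" where
  "spd l d = concat (map (\<lambda>p. [(\<lambda>x. frechet_derivative (fst p) (at x) d, snd p), (fst p, \<lambda>x. frechet_derivative (snd p) (at x) d)]) l)"

lemma spd_simps [simp]: "spd [] d = []"
  "spd (p#l) d = (\<lambda>x. frechet_derivative (fst p) (at x) d, snd p) # (fst p, \<lambda>x. frechet_derivative (snd p) (at x) d) # spd l d"
  by (simp_all add: spd_def)

lemma sp_deriv:
  fixes l :: "(('a::euclidean_space \<Rightarrow> real) \<times> ('a \<Rightarrow> real)) list"
  assumes "\<forall>p\<in>set l. smooth_map (fst p) \<and> smooth_map (snd p)"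
  shows "(sp l has_derivative (\<lambda>d. sp (spd l d) x)) (at x)"
  using assms
proof (induction l)
  case Nil
  then show ?case by (simp add: sp_def[abs_def])
next
  case (Cons p l)
  have a: "smooth_map (fst p)" and b: "smooth_map (snd p)" using Cons.prems by auto
  have e: "sp (p#l) = (\<lambda>x. fst p x * snd p x + sp l x)" by (auto simp: fun_eq_iff)
  have d1: "((\<lambda>x. fst p x * snd p x) has_derivative (\<lambda>d. fst p x * frechet_derivative (snd p) (at x) d + frechet_derivative (fst p) (at x) d * snd p x)) (at x)"
    by (rule has_derivative_mult[OF smooth_has_derivative[OF a] smooth_has_derivative[OF b]])
  have d2: "(sp l has_derivative (\<lambda>d. sp (spd l d) x)) (at x)" using Cons by auto
  show ?case unfolding e
    by (rule has_derivative_eq_rhs[OF has_derivative_add[OF d1 d2]]) (simp add: fun_eq_iff)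
qed

lemma spd_smooth: "\<forall>p\<in>set l. smooth_map (fst p) \<and> smooth_map (snd p) \<Longrightarrow> \<forall>p\<in>set (spd l d). smooth_map (fst p) \<and> smooth_map (snd p)"
proof (induction l)
  case Nil
  then show ?case by simp
next
  case (Cons p l)
  then show ?case using smooth_deriv[of "fst p" d] smooth_deriv[of "snd p" d] by simp
qed

lemma smooth_sp_aux:
  fixes g :: "'a::euclidean_space \<Rightarrow> real"
  assumes "\<exists>l. g = sp l \<and> (\<forall>p\<in>set l. smooth_map (fst p) \<and> smooth_map (snd p))"
  shows "smooth_map g"
  using assms
proof (coinduction arbitrary: g rule: smooth_map.coinduct)
  case (smooth_map g)
  then obtain l where g: "g = sp l" and l: "\<forall>p\<in>set l. smooth_map (fst p) \<and> smooth_map (snd p)" by blast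
  have dg: "\<And>x. (g has_derivative (\<lambda>d. sp (spd l d) x)) (at x)"
    unfolding g using sp_deriv[OF l] .
  have 1: "\<forall>x. g differentiable at x" using dg differentiableI by blast
  have fd0: "frechet_derivative g (at x) = (\<lambda>d. sp (spd l d) x)" for x
    using frechet_derivative_at[OF dg[of x]] by simp
  have fd: "(\<lambda>x. frechet_derivative g (at x) d) = sp (spd l d)" for d
    by (simp add: fd0)
  show ?case
  proof (rule exI[of _ g], intro conjI refl 1 allI disjI1)
    fix d
    show "\<exists>ga. (\<lambda>x. frechet_derivative g (at x) d) = ga \<and> (\<exists>l. ga = sp l \<and> (\<forall>p\<in>set l. smooth_map (fst p) \<and> smooth_map (snd p)))"
      by (rule exI[of _ "sp (spd l d)"], rule conjI[OF fd], rule exI[of _ "spd l d"], rule conjI[OF refl spd_smooth[OF l]])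
  qed
qed

lemma smooth_mult: "smooth_map f \<Longrightarrow> smooth_map g \<Longrightarrow> smooth_map (\<lambda>x. f x * g x :: real)"
  by (rule smooth_sp_aux, rule exI[of _ "[(f,g)]"]) (auto simp: fun_eq_iff)

lemma smooth_add: "smooth_map f \<Longrightarrow> smooth_map g \<Longrightarrow> smooth_map (\<lambda>x. f x + g x :: real)"
  by (rule smooth_sp_aux, rule exI[of _ "[(f,\<lambda>_. 1),(g,\<lambda>_. 1)]"]) (auto simp: fun_eq_iff smooth_const)

lemma smooth_cmult: "smooth_map f \<Longrightarrow> smooth_map (\<lambda>x. c * f x :: real)"
  using smooth_mult[OF smooth_const] .

lemma smooth_minus: "smooth_map f \<Longrightarrow> smooth_map g \<Longrightarrow> smooth_map (\<lambda>x. f x - g x :: real)"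
  using smooth_add[OF _ smooth_cmult[of g "-1"]] by simp

lemma smooth_sum: "finite I \<Longrightarrow> (\<And>i. i \<in> I \<Longrightarrow> smooth_map (f i)) \<Longrightarrow> smooth_map (\<lambda>x. \<Sum>i\<in>I. f i x :: real)"
  by (induction I rule: finite_induct) (auto simp: smooth_const smooth_add)

lemma smooth_exp_lin:
  fixes T :: "'a::euclidean_space \<Rightarrow> real"
  assumes "linear T"
  shows "smooth_map (\<lambda>x. k * exp (T x))"
proof -
  have "\<And>g. (\<exists>k. g = (\<lambda>x. k * exp (T x))) \<Longrightarrow> smooth_map g"
  proof (coinduction rule: smooth_map.coinduct)
    case (smooth_map g)
    then obtain k where g: "g = (\<lambda>x. k * exp (T x))" by blast
    have dT: "\<And>x. (T has_derivative T) (at x)"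
      using assms by (simp add: linear_conv_bounded_linear bounded_linear_imp_has_derivative)
    have dg: "\<And>x. (g has_derivative (\<lambda>d. (k * T d) * exp (T x))) (at x)"
      unfolding g
      by (rule derivative_eq_intros dT | simp)+ (auto simp: fun_eq_iff)
    have fd0: "frechet_derivative g (at x) = (\<lambda>d. (k * T d) * exp (T x))" for x
      using frechet_derivative_at[OF dg[of x]] by simp
    have fd: "(\<lambda>x. frechet_derivative g (at x) d) = (\<lambda>x. (k * T d) * exp (T x))" for d
      by (simp add: fd0)
    show ?case using dg differentiableI fd by blast
  qed
  then show ?thesis by blast
qed



lemma line_deriv:
  fixes h :: "'a::euclidean_space \<Rightarrow> real"
  assumes "smooth_map h"
  shows "((\<lambda>r. h (a + r *\<^sub>R u)) has_derivative (\<lambda>y. y * frechet_derivative h (at (a + r *\<^sub>R u)) u)) (at r)"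
proof -
  have l: "((\<lambda>r. a + r *\<^sub>R u) has_derivative (\<lambda>y. y *\<^sub>R u)) (at r)"
    by (rule derivative_eq_intros refl | simp)+
  have hd: "(h has_derivative frechet_derivative h (at (a + r *\<^sub>R u))) (at (a + r *\<^sub>R u))"
    using smooth_has_derivative[OF assms] .
  have lin: "linear (frechet_derivative h (at (a + r *\<^sub>R u)))"
    using hd has_derivative_linear by blast
  show ?thesis
    using diff_chain_at[OF l hd] by (simp add: o_def linear_scale[OF lin])
qed

lemma schwarz_aux:
  fixes h :: "'a::euclidean_space \<Rightarrow> real"
  assumes h: "smooth_map h" and e: "e > 0"
  shows "\<exists>d>0. \<forall>s. 0 < s \<and> s < d \<longrightarrow>
     \<bar>(h (p + s *\<^sub>R u + s *\<^sub>R v) - h (p + s *\<^sub>R u) - h (p + s *\<^sub>R v) + h p)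
        - s^2 * frechet_derivative (\<lambda>q. frechet_derivative h (at q) u) (at p) v\<bar> \<le> e * s^2"
proof -
  define k where "k q = frechet_derivative h (at q) u" for q
  define G where "G = frechet_derivative k (at p)"
  have kd: "(k has_derivative G) (at p)"
    unfolding G_def k_def using smooth_has_derivative[OF smooth_deriv[OF h]] .
  have Glin: "linear G" using kd has_derivative_linear by blast
  define C where "C = 2 * norm u + norm v + 1"
  have C: "C > 0" unfolding C_def by (simp add: add_nonneg_pos)
  define e' where "e' = e / C"
  have e': "e' > 0" unfolding e'_def using e C by simp
  obtain \<delta> where \<delta>: "\<delta> > 0" and \<delta>k: "\<And>y. norm (y - p) < \<delta> \<Longrightarrow> norm (k y - k p - G (y - p)) \<le> e' * norm (y - p)"
    using kd e' unfolding has_derivative_at_alt by blast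
  define d where "d = \<delta> / C"
  have d: "d > 0" unfolding d_def using \<delta> C by simp
  have bound: "\<bar>(h (p + s *\<^sub>R u + s *\<^sub>R v) - h (p + s *\<^sub>R u) - h (p + s *\<^sub>R v) + h p) - s^2 * G v\<bar> \<le> e * s^2"
    if s: "0 < s" "s < d" for s
  proof -
    define \<phi> where "\<phi> r = h ((p + s *\<^sub>R v) + r *\<^sub>R u) - h (p + r *\<^sub>R u)" for r
    have \<phi>d: "(\<phi> has_derivative (\<lambda>y. y * (k ((p + s *\<^sub>R v) + r *\<^sub>R u) - k (p + r *\<^sub>R u)))) (at r within {0..s})" for r
      unfolding \<phi>_def[abs_def] k_def
      by (rule has_derivative_at_withinI, rule has_derivative_eq_rhs,
          rule has_derivative_diff[OF line_deriv[OF h] line_deriv[OF h]]) (simp add: algebra_simps)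
    obtain \<theta> where \<theta>: "\<theta> \<in> {0<..<s}" and mv: "\<phi> s - \<phi> 0 = (s - 0) * (k ((p + s *\<^sub>R v) + \<theta> *\<^sub>R u) - k (p + \<theta> *\<^sub>R u))"
      using mvt_simple[OF s(1) \<phi>d] by blast
    have \<theta>0: "0 < \<theta>" "\<theta> < s" using \<theta> by auto
    have sC: "s * C < \<delta>" using s C unfolding d_def by (simp add: pos_less_divide_eq)
    define w1 where "w1 = \<theta> *\<^sub>R u + s *\<^sub>R v"
    define w2 where "w2 = \<theta> *\<^sub>R u"
    have nw1: "norm w1 \<le> s * (norm u + norm v)"
      unfolding w1_def using \<theta>0 s
      by (smt (verit, best) mult_right_mono norm_ge_zero norm_scaleR norm_triangle_ineq distrib_left)
    have nw2: "norm w2 \<le> s * norm u"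
      unfolding w2_def using \<theta>0 by (simp add: mult_right_mono)
    have Cge: "s * (norm u + norm v) \<le> s * C" "s * norm u \<le> s * C"
      unfolding C_def using s by (simp_all add: mult_left_mono)
    have e1: "norm (k (p + w1) - k p - G w1) \<le> e' * norm w1"
      using \<delta>k[of "p + w1"] nw1 Cge sC by simp
    have e2: "norm (k (p + w2) - k p - G w2) \<le> e' * norm w2"
      using \<delta>k[of "p + w2"] nw2 Cge sC by simp
    have Gw: "G w1 - G w2 = s * G v"
      unfolding w1_def w2_def using Glin by (simp add: linear_add linear_scale)
    have diff: "k ((p + s *\<^sub>R v) + \<theta> *\<^sub>R u) - k (p + \<theta> *\<^sub>R u) = (k (p + w1) - k p - G w1) - (k (p + w2) - k p - G w2) + s * G v"
      using Gw unfolding w1_def w2_def by (simp add: algebra_simps)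
    have "\<bar>k ((p + s *\<^sub>R v) + \<theta> *\<^sub>R u) - k (p + \<theta> *\<^sub>R u) - s * G v\<bar> \<le> e' * norm w1 + e' * norm w2"
      using e1 e2 diff by simp
    also have "\<dots> \<le> e' * (s * C)"
    proof -
      have "norm w1 + norm w2 \<le> s * C" using nw1 nw2 unfolding C_def using s by (simp add: algebra_simps)
      then show ?thesis using e' by (simp add: distrib_left[symmetric] mult_left_mono)
    qed
    also have "\<dots> = e * s" unfolding e'_def using C by simp
    finally have kb: "\<bar>k ((p + s *\<^sub>R v) + \<theta> *\<^sub>R u) - k (p + \<theta> *\<^sub>R u) - s * G v\<bar> \<le> e * s" .
    have "(h (p + s *\<^sub>R u + s *\<^sub>R v) - h (p + s *\<^sub>R u) - h (p + s *\<^sub>R v) + h p) - s^2 * G v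
          = s * (k ((p + s *\<^sub>R v) + \<theta> *\<^sub>R u) - k (p + \<theta> *\<^sub>R u) - s * G v)"
      using mv unfolding \<phi>_def by (simp add: algebra_simps power2_eq_square)
    then have "\<bar>(h (p + s *\<^sub>R u + s *\<^sub>R v) - h (p + s *\<^sub>R u) - h (p + s *\<^sub>R v) + h p) - s^2 * G v\<bar>
          = s * \<bar>k ((p + s *\<^sub>R v) + \<theta> *\<^sub>R u) - k (p + \<theta> *\<^sub>R u) - s * G v\<bar>"
      using s by (simp add: abs_mult)
    also have "\<dots> \<le> s * (e * s)" using kb s by (simp add: mult_left_mono)
    finally show ?thesis by (simp add: power2_eq_square algebra_simps)
  qed
  show ?thesis unfolding G_def[symmetric] k_def[symmetric] using d bound by blast
qed

lemma schwarz:
  fixes h :: "'a::euclidean_space \<Rightarrow> real"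
  assumes h: "smooth_map h"
  shows "frechet_derivative (\<lambda>q. frechet_derivative h (at q) u) (at p) v
       = frechet_derivative (\<lambda>q. frechet_derivative h (at q) v) (at p) u"
proof (rule ccontr)
  define a where "a = frechet_derivative (\<lambda>q. frechet_derivative h (at q) u) (at p) v"
  define b where "b = frechet_derivative (\<lambda>q. frechet_derivative h (at q) v) (at p) u"
  assume "\<not> ?thesis"
  then have ab: "\<bar>a - b\<bar> > 0" unfolding a_def b_def by simp
  define e where "e = \<bar>a - b\<bar> / 4"
  have e: "e > 0" using ab unfolding e_def by simp
  obtain d1 where d1: "d1 > 0" and b1: "\<And>s. 0 < s \<Longrightarrow> s < d1 \<Longrightarrow>
     \<bar>(h (p + s *\<^sub>R u + s *\<^sub>R v) - h (p + s *\<^sub>R u) - h (p + s *\<^sub>R v) + h p) - s^2 * a\<bar> \<le> e * s^2"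
    using schwarz_aux[OF h e, of p u v] unfolding a_def by blast
  obtain d2 where d2: "d2 > 0" and b2: "\<And>s. 0 < s \<Longrightarrow> s < d2 \<Longrightarrow>
     \<bar>(h (p + s *\<^sub>R v + s *\<^sub>R u) - h (p + s *\<^sub>R v) - h (p + s *\<^sub>R u) + h p) - s^2 * b\<bar> \<le> e * s^2"
    using schwarz_aux[OF h e, of p v u] unfolding b_def by blast
  define s where "s = min d1 d2 / 2"
  have s: "0 < s" "s < d1" "s < d2" unfolding s_def using d1 d2 by auto
  have sym: "p + s *\<^sub>R v + s *\<^sub>R u = p + s *\<^sub>R u + s *\<^sub>R v" by (simp add: algebra_simps)
  have "\<bar>s^2 * a - s^2 * b\<bar> \<le> 2 * e * s^2"
    using b1[OF s(1,2)] b2[OF s(1,3)] unfolding sym by linarith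
  then have "s^2 * \<bar>a - b\<bar> \<le> s^2 * (2 * e)"
  proof -
    have "\<bar>s^2 * a - s^2 * b\<bar> = s^2 * \<bar>a - b\<bar>"
      by (simp add: right_diff_distrib[symmetric] abs_mult)
    then show ?thesis using \<open>\<bar>s^2 * a - s^2 * b\<bar> \<le> 2 * e * s^2\<close> by (simp add: algebra_simps)
  qed
  then have "\<bar>a - b\<bar> \<le> 2 * e" using s by simp
  then show False using ab unfolding e_def by simp
qed



type_synonym ('v,'z) pt = "'v \<times> 'z \<times> real"

definition Ef :: "('v::euclidean_space \<Rightarrow> 'v \<Rightarrow> 'z::euclidean_space) \<Rightarrow> ('v,'z) pt \<Rightarrow> ('v,'z) pt \<Rightarrow> ('v,'z) pt" where
  "Ef br P q = (exp (snd (snd q) / 2) *\<^sub>R fst P,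
               exp (snd (snd q)) *\<^sub>R fst (snd P) + (exp (snd (snd q) / 2) / 2) *\<^sub>R br (fst q) (fst P),
               snd (snd P))"

definition DEf :: "('v::euclidean_space \<Rightarrow> 'v \<Rightarrow> 'z::euclidean_space) \<Rightarrow> ('v,'z) pt \<Rightarrow> ('v,'z) pt \<Rightarrow> ('v,'z) pt \<Rightarrow> ('v,'z) pt" where
  "DEf br P q d = ((snd (snd d) / 2 * exp (snd (snd q) / 2)) *\<^sub>R fst P,
               (snd (snd d) * exp (snd (snd q))) *\<^sub>R fst (snd P)
                 + (snd (snd d) / 2 * exp (snd (snd q) / 2) / 2) *\<^sub>R br (fst q) (fst P)
                 + (exp (snd (snd q) / 2) / 2) *\<^sub>R br (fst d) (fst P),
               0)"

definition brk :: "('v::euclidean_space \<Rightarrow> 'v \<Rightarrow> 'z::euclidean_space) \<Rightarrow> ('v,'z) pt \<Rightarrow> ('v,'z) pt \<Rightarrow> ('v,'z) pt" where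
  "brk br a b = ((snd (snd a) / 2) *\<^sub>R fst b - (snd (snd b) / 2) *\<^sub>R fst a,
                snd (snd a) *\<^sub>R fst (snd b) - snd (snd b) *\<^sub>R fst (snd a) + br (fst a) (fst b),
                0)"

definition ED :: "('v::euclidean_space \<Rightarrow> 'v \<Rightarrow> 'z::euclidean_space) \<Rightarrow> ('v,'z) pt \<Rightarrow> (('v,'z) pt \<Rightarrow> real) \<Rightarrow> ('v,'z) pt \<Rightarrow> real" where
  "ED br P h q = frechet_derivative h (at q) (Ef br P q)"

lemma br_fst_deriv:
  fixes br :: "'v::euclidean_space \<Rightarrow> 'v \<Rightarrow> 'z::euclidean_space" and q :: "('v,'z) pt"
  assumes "bilinear br"
  shows "((\<lambda>q. br (fst q) c) has_derivative (\<lambda>d. br (fst d) c)) (at q)"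
proof -
  have "linear (\<lambda>q. br (fst q) c)"
    using assms unfolding bilinear_def
    by (intro linear_compose[of fst "\<lambda>x. br x c", unfolded o_def]) (auto intro: linear_fst)
  then show ?thesis by (rule linear_imp_has_derivative)
qed

lemma Ef_deriv:
  fixes br :: "'v::euclidean_space \<Rightarrow> 'v \<Rightarrow> 'z::euclidean_space"
  assumes "bilinear br"
  shows "(Ef br P has_derivative DEf br P q) (at q)"
proof -
  have t: "((\<lambda>q::('v,'z) pt. snd (snd q)) has_derivative (\<lambda>d. snd (snd d))) (at q)"
    by (rule derivative_eq_intros refl)+
  have b: "((\<lambda>x. br (fst x) (fst P)) has_derivative (\<lambda>d. br (fst d) (fst P))) (at q)"
    by (rule br_fst_deriv[OF assms])
  have c1: "((\<lambda>q::('v,'z) pt. exp (snd (snd q) / 2) *\<^sub>R fst P) has_derivative (\<lambda>d. (snd (snd d) / 2 * exp (snd (snd q) / 2)) *\<^sub>R fst P)) (at q)"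
    by (rule derivative_eq_intros t refl | simp)+
  have c2: "((\<lambda>q::('v,'z) pt. exp (snd (snd q)) *\<^sub>R fst (snd P) + (exp (snd (snd q) / 2) / 2) *\<^sub>R br (fst q) (fst P)) has_derivative
     (\<lambda>d. (snd (snd d) * exp (snd (snd q))) *\<^sub>R fst (snd P)
                 + (snd (snd d) / 2 * exp (snd (snd q) / 2) / 2) *\<^sub>R br (fst q) (fst P)
                 + (exp (snd (snd q) / 2) / 2) *\<^sub>R br (fst d) (fst P))) (at q)"
    by (rule derivative_eq_intros b t refl | simp add: fun_eq_iff algebra_simps)+
  have c3: "((\<lambda>q::('v,'z) pt. snd (snd P)) has_derivative (\<lambda>d. 0)) (at q)"
    by (rule has_derivative_const)
  show ?thesis
    unfolding Ef_def[abs_def] DEf_def[abs_def]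
    by (rule has_derivative_Pair[OF c1 has_derivative_Pair[OF c2 c3]])
qed

lemma deriv_along:
  fixes h :: "'a::euclidean_space \<Rightarrow> real"
  assumes h: "smooth_map h" and W: "(W has_derivative DW) (at p)"
  shows "((\<lambda>q. frechet_derivative h (at q) (W q)) has_derivative
     (\<lambda>e. frechet_derivative h (at p) (DW e) + frechet_derivative (\<lambda>q. frechet_derivative h (at q) (W p)) (at p) e)) (at p)"
proof -
  define H where "H b = frechet_derivative (\<lambda>q. frechet_derivative h (at q) b) (at p)" for b
  have Hd: "((\<lambda>q. frechet_derivative h (at q) b) has_derivative H b) (at p)" for b
    unfolding H_def using smooth_has_derivative[OF smooth_deriv[OF h]] .
  have lin: "linear (frechet_derivative h (at q))" for q
    using smooth_has_derivative[OF h] has_derivative_linear by blast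
  have rep: "frechet_derivative h (at q) w = (\<Sum>b\<in>Basis. (w \<bullet> b) * frechet_derivative h (at q) b)" for q w
  proof -
    have "frechet_derivative h (at q) w = frechet_derivative h (at q) (\<Sum>b\<in>Basis. (w \<bullet> b) *\<^sub>R b)"
      by (simp add: euclidean_representation)
    also have "\<dots> = (\<Sum>b\<in>Basis. (w \<bullet> b) * frechet_derivative h (at q) b)"
      by (simp add: linear_sum[OF lin] linear_scale[OF lin])
    finally show ?thesis .
  qed
  have e1: "(\<lambda>q. frechet_derivative h (at q) (W q)) = (\<lambda>q. \<Sum>b\<in>Basis. (W q \<bullet> b) * frechet_derivative h (at q) b)"
    using rep by blast
  have e2: "(\<lambda>q. frechet_derivative h (at q) (W p)) = (\<lambda>q. \<Sum>b\<in>Basis. (W p \<bullet> b) * frechet_derivative h (at q) b)"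
    using rep by blast
  have d1: "((\<lambda>q. \<Sum>b\<in>Basis. (W q \<bullet> b) * frechet_derivative h (at q) b) has_derivative
      (\<lambda>e. \<Sum>b\<in>Basis. (W p \<bullet> b) * H b e + (DW e \<bullet> b) * frechet_derivative h (at p) b)) (at p)"
    by (rule has_derivative_sum, rule has_derivative_mult[OF has_derivative_inner_left[OF W] Hd])
  have d2: "((\<lambda>q. \<Sum>b\<in>Basis. (W p \<bullet> b) * frechet_derivative h (at q) b) has_derivative
      (\<lambda>e. \<Sum>b\<in>Basis. (W p \<bullet> b) * H b e)) (at p)"
    by (rule has_derivative_sum, rule has_derivative_eq_rhs[OF has_derivative_mult[OF has_derivative_const Hd]]) simp
  have fd2: "frechet_derivative (\<lambda>q. frechet_derivative h (at q) (W p)) (at p) = (\<lambda>e. \<Sum>b\<in>Basis. (W p \<bullet> b) * H b e)"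
    unfolding e2 using frechet_derivative_at[OF d2] by simp
  show ?thesis unfolding e1 fd2
    by (rule has_derivative_eq_rhs[OF d1]) (simp add: fun_eq_iff sum.distrib rep[symmetric])
qed

lemma comm_general:
  fixes h :: "'a::euclidean_space \<Rightarrow> real"
  assumes h: "smooth_map h" and W1: "(W1 has_derivative DW1) (at p)" and W2: "(W2 has_derivative DW2) (at p)"
  shows "frechet_derivative (\<lambda>q. frechet_derivative h (at q) (W2 q)) (at p) (W1 p)
       - frechet_derivative (\<lambda>q. frechet_derivative h (at q) (W1 q)) (at p) (W2 p)
       = frechet_derivative h (at p) (DW2 (W1 p) - DW1 (W2 p))"
proof -
  have lin: "linear (frechet_derivative h (at p))"
    using smooth_has_derivative[OF h] has_derivative_linear by blast
  note f1 = frechet_derivative_at[OF deriv_along[OF h W1], symmetric]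
  note f2 = frechet_derivative_at[OF deriv_along[OF h W2], symmetric]
  show ?thesis unfolding f1 f2
    using schwarz[OF h, of "W1 p" p "W2 p"] by (simp add: linear_diff[OF lin])
qed

lemma exp_half_sq: "exp (x / 2) * exp (x / 2) = exp (x::real)"
  by (simp add: exp_add[symmetric])

lemma brk_identity:
  fixes br :: "'v::euclidean_space \<Rightarrow> 'v \<Rightarrow> 'z::euclidean_space"
  assumes bl: "bilinear br" and sk: "\<And>a b. br a b = - br b a"
  shows "DEf br Q p (Ef br P p) - DEf br P p (Ef br Q p) = Ef br (brk br P Q) p"
proof -
  obtain V Z t where p: "p = (V, Z, t)" by (cases p) auto
  obtain P1 P2 P3 where P: "P = (P1, P2, P3)" by (cases P) auto
  obtain Q1 Q2 Q3 where Q: "Q = (Q1, Q2, Q3)" by (cases Q) auto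
  have s1: "br Q1 P1 = - br P1 Q1" by (rule sk)
  have c1: "(P3 / 2 * exp (t / 2)) *\<^sub>R Q1 - (Q3 / 2 * exp (t / 2)) *\<^sub>R P1
      = exp (t / 2) *\<^sub>R ((P3 / 2) *\<^sub>R Q1 - (Q3 / 2) *\<^sub>R P1)"
    by (simp add: algebra_simps)
  have c2: "((P3 * exp t) *\<^sub>R Q2 + (P3 / 2 * exp (t / 2) / 2) *\<^sub>R br V Q1 + (exp (t / 2) / 2) *\<^sub>R br (exp (t / 2) *\<^sub>R P1) Q1)
          - ((Q3 * exp t) *\<^sub>R P2 + (Q3 / 2 * exp (t / 2) / 2) *\<^sub>R br V P1 + (exp (t / 2) / 2) *\<^sub>R br (exp (t / 2) *\<^sub>R Q1) P1)
      = exp t *\<^sub>R (P3 *\<^sub>R Q2 - Q3 *\<^sub>R P2 + br P1 Q1) + (exp (t / 2) / 2) *\<^sub>R br V ((P3 / 2) *\<^sub>R Q1 - (Q3 / 2) *\<^sub>R P1)"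
  proof -
    have f1: "(exp (t / 2) / 2) *\<^sub>R br (exp (t / 2) *\<^sub>R P1) Q1 = (exp t / 2) *\<^sub>R br P1 Q1"
      by (simp add: bilinear_lmul[OF bl] exp_half_sq[of t, symmetric])
    have f2: "(exp (t / 2) / 2) *\<^sub>R br (exp (t / 2) *\<^sub>R Q1) P1 = - (exp t / 2) *\<^sub>R br P1 Q1"
      by (simp add: bilinear_lmul[OF bl] exp_half_sq[of t, symmetric] s1)
    have f3: "br V ((P3 / 2) *\<^sub>R Q1 - (Q3 / 2) *\<^sub>R P1) = (P3 / 2) *\<^sub>R br V Q1 - (Q3 / 2) *\<^sub>R br V P1"
      by (simp add: bilinear_rsub[OF bl] bilinear_rmul[OF bl])
    show ?thesis unfolding f1 f2 f3 by (simp add: algebra_simps; simp add: scaleR_add_left[symmetric])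
  qed
  show ?thesis
    unfolding p P Q Ef_def DEf_def brk_def
    using c1 c2 by (simp add: algebra_simps)
qed

lemma ED_comm:
  fixes br :: "'v::euclidean_space \<Rightarrow> 'v \<Rightarrow> 'z::euclidean_space"
  assumes bl: "bilinear br" and sk: "\<And>a b. br a b = - br b a" and h: "smooth_map h"
  shows "ED br P (ED br Q h) p - ED br Q (ED br P h) p = ED br (brk br P Q) h p"
proof -
  have "ED br P (ED br Q h) p - ED br Q (ED br P h) p
     = frechet_derivative h (at p) (DEf br Q p (Ef br P p) - DEf br P p (Ef br Q p))"
    unfolding ED_def[abs_def]
    by (rule comm_general[OF h Ef_deriv[OF bl] Ef_deriv[OF bl]])
  also have "\<dots> = ED br (brk br P Q) h p"
    unfolding brk_identity[OF bl sk] ED_def ..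
  finally show ?thesis .
qed



lemma lin_br_inner:
  fixes br :: "'v::euclidean_space \<Rightarrow> 'v \<Rightarrow> 'z::euclidean_space"
  assumes "bilinear br"
  shows "linear (\<lambda>q::('v,'z) pt. br (fst q) a \<bullet> c)"
proof -
  have "linear (\<lambda>q::('v,'z) pt. br (fst q) a)"
    using has_derivative_linear[OF br_fst_deriv[OF assms]] by simp
  then show ?thesis
    by (rule linear_compose[of _ "\<lambda>x. x \<bullet> c", unfolded o_def]) (simp add: linear_iff inner_add_left)
qed

lemma smooth_Ef_inner:
  fixes br :: "'v::euclidean_space \<Rightarrow> 'v \<Rightarrow> 'z::euclidean_space"
  assumes bl: "bilinear br"
  shows "smooth_map (\<lambda>q. Ef br P q \<bullet> c)"
proof -
  have T: "linear (\<lambda>q::('v,'z) pt. snd (snd q) / 2)" "linear (\<lambda>q::('v,'z) pt. snd (snd q))"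
    by (simp_all add: linear_iff)
  have e: "(\<lambda>q. Ef br P q \<bullet> c) = (\<lambda>q. ((fst P \<bullet> fst c) * exp (snd (snd q) / 2) + (fst (snd P) \<bullet> fst (snd c)) * exp (snd (snd q)))
     + ((1/2) * exp (snd (snd q) / 2)) * (br (fst q) (fst P) \<bullet> fst (snd c)) + snd (snd P) * snd (snd c))"
    by (simp add: Ef_def fun_eq_iff inner_prod_def algebra_simps)
  show ?thesis unfolding e
    by (intro smooth_add smooth_mult smooth_exp_lin T smooth_linear lin_br_inner[OF bl] smooth_const)
qed

lemma frechet_lin:
  assumes "smooth_map h"
  shows "linear (frechet_derivative h (at q))"
  using smooth_has_derivative[OF assms] has_derivative_linear by blast

lemma frechet_rep:
  fixes h :: "'a::euclidean_space \<Rightarrow> real"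
  assumes "smooth_map h"
  shows "frechet_derivative h (at q) w = (\<Sum>b\<in>Basis. (w \<bullet> b) * frechet_derivative h (at q) b)"
proof -
  have "frechet_derivative h (at q) w = frechet_derivative h (at q) (\<Sum>b\<in>Basis. (w \<bullet> b) *\<^sub>R b)"
    by (simp add: euclidean_representation)
  also have "\<dots> = (\<Sum>b\<in>Basis. (w \<bullet> b) * frechet_derivative h (at q) b)"
    by (simp add: linear_sum[OF frechet_lin[OF assms]] linear_scale[OF frechet_lin[OF assms]])
  finally show ?thesis .
qed

lemma smooth_ED:
  fixes br :: "'v::euclidean_space \<Rightarrow> 'v \<Rightarrow> 'z::euclidean_space"
  assumes bl: "bilinear br" and h: "smooth_map h"
  shows "smooth_map (ED br P h)"
proof -
  have e: "ED br P h = (\<lambda>q. \<Sum>b\<in>Basis. (Ef br P q \<bullet> b) * frechet_derivative h (at q) b)"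
    unfolding ED_def using frechet_rep[OF h] by blast
  show ?thesis unfolding e
    by (intro smooth_sum finite_Basis smooth_mult smooth_Ef_inner[OF bl] smooth_deriv[OF h])
qed

lemma ED_add:
  assumes "smooth_map f" "smooth_map g"
  shows "ED br P (\<lambda>q. f q + g q) p = ED br P f p + ED br P g p"
  unfolding ED_def
  using frechet_derivative_at[OF has_derivative_add[OF smooth_has_derivative[OF assms(1)] smooth_has_derivative[OF assms(2)]], of p, symmetric]
  by simp

lemma ED_diff:
  assumes "smooth_map f" "smooth_map g"
  shows "ED br P (\<lambda>q. f q - g q) p = ED br P f p - ED br P g p"
  unfolding ED_def
  using frechet_derivative_at[OF has_derivative_diff[OF smooth_has_derivative[OF assms(1)] smooth_has_derivative[OF assms(2)]], of p, symmetric]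
  by simp

lemma ED_cmult:
  assumes "smooth_map f"
  shows "ED br P (\<lambda>q. c * f q) p = c * ED br P f p"
  unfolding ED_def
  using frechet_derivative_at[OF has_derivative_mult_right[OF smooth_has_derivative[OF assms(1)]], symmetric]
  by simp

lemma ED_scaleP:
  fixes br :: "'v::euclidean_space \<Rightarrow> 'v \<Rightarrow> 'z::euclidean_space"
  assumes bl: "bilinear br" and h: "smooth_map h"
  shows "ED br (c *\<^sub>R P) h p = c * ED br P h p"
proof -
  have "Ef br (c *\<^sub>R P) p = c *\<^sub>R Ef br P p"
    by (simp add: Ef_def bilinear_rmul[OF bl] algebra_simps)
  then show ?thesis unfolding ED_def by (simp add: linear_scale[OF frechet_lin[OF h]])
qed

lemma ED_zeroP:
  fixes br :: "'v::euclidean_space \<Rightarrow> 'v \<Rightarrow> 'z::euclidean_space"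
  assumes bl: "bilinear br" and h: "smooth_map h"
  shows "ED br 0 h p = 0"
proof -
  have "Ef br 0 p = 0"
    by (simp add: Ef_def bilinear_rzero[OF bl] zero_prod_def)
  then show ?thesis unfolding ED_def by (simp add: linear_0[OF frechet_lin[OF h]])
qed



definition Nm :: "('v::euclidean_space \<Rightarrow> 'v \<Rightarrow> 'z::euclidean_space) \<Rightarrow> ('v,'z) pt \<Rightarrow> ('v,'z) pt \<Rightarrow> ('v,'z) pt" where
  "Nm br q u = (exp (- snd (snd q) / 2) *\<^sub>R fst u,
               exp (- snd (snd q)) *\<^sub>R (fst (snd u) - (1/2) *\<^sub>R br (fst q) (fst u)),
               snd (snd u))"

definition DNm :: "('v::euclidean_space \<Rightarrow> 'v \<Rightarrow> 'z::euclidean_space) \<Rightarrow> ('v,'z) pt \<Rightarrow> ('v,'z) pt \<Rightarrow> ('v,'z) pt \<Rightarrow> ('v,'z) pt" where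
  "DNm br q d u = ((- snd (snd d) / 2 * exp (- snd (snd q) / 2)) *\<^sub>R fst u,
               (- snd (snd d) * exp (- snd (snd q))) *\<^sub>R (fst (snd u) - (1/2) *\<^sub>R br (fst q) (fst u))
                 + exp (- snd (snd q)) *\<^sub>R (- (1/2) *\<^sub>R br (fst d) (fst u)),
               0)"

lemma br_snd_deriv:
  fixes br :: "'v::euclidean_space \<Rightarrow> 'v \<Rightarrow> 'z::euclidean_space" and q :: "('v,'z) pt"
  assumes "bilinear br"
  shows "((\<lambda>q. br c (fst q)) has_derivative (\<lambda>d. br c (fst d))) (at q)"
proof -
  have "linear (\<lambda>q::('v,'z) pt. br c (fst q))"
    using assms unfolding bilinear_def
    by (intro linear_compose[of fst "\<lambda>x. br c x", unfolded o_def]) (auto intro: linear_fst)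
  then show ?thesis by (rule linear_imp_has_derivative)
qed

lemma s_inner_eq: "s_inner u w = inner u w"
  by (cases u; cases w) (auto simp: s_inner_def)

lemma dr_mult_eq:
  "dr_mult br a = (\<lambda>x. (fst a + exp (snd (snd a) / 2) *\<^sub>R fst x,
      fst (snd a) + exp (snd (snd a)) *\<^sub>R fst (snd x) + (exp (snd (snd a) / 2) / 2) *\<^sub>R br (fst a) (fst x),
      snd (snd a) + snd (snd x)))"
  by (auto simp: dr_mult_def fun_eq_iff split: prod.splits)

lemma dr_mult_deriv:
  fixes br :: "'v::euclidean_space \<Rightarrow> 'v \<Rightarrow> 'z::euclidean_space"
  assumes bl: "bilinear br"
  shows "(dr_mult br a has_derivative (\<lambda>d. (exp (snd (snd a) / 2) *\<^sub>R fst d,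
      exp (snd (snd a)) *\<^sub>R fst (snd d) + (exp (snd (snd a) / 2) / 2) *\<^sub>R br (fst a) (fst d),
      snd (snd d)))) (at x)"
proof -
  have b: "((\<lambda>x::('v,'z) pt. br (fst a) (fst x)) has_derivative (\<lambda>d. br (fst a) (fst d))) (at x)"
    by (rule br_snd_deriv[OF bl])
  have c1: "((\<lambda>x::('v,'z) pt. fst a + exp (snd (snd a) / 2) *\<^sub>R fst x) has_derivative (\<lambda>d. exp (snd (snd a) / 2) *\<^sub>R fst d)) (at x)"
    by (rule derivative_eq_intros refl | simp)+
  have c2: "((\<lambda>x::('v,'z) pt. fst (snd a) + exp (snd (snd a)) *\<^sub>R fst (snd x) + (exp (snd (snd a) / 2) / 2) *\<^sub>R br (fst a) (fst x))
     has_derivative (\<lambda>d. exp (snd (snd a)) *\<^sub>R fst (snd d) + (exp (snd (snd a) / 2) / 2) *\<^sub>R br (fst a) (fst d))) (at x)"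
    by (rule derivative_eq_intros b refl | simp)+
  have c3: "((\<lambda>x::('v,'z) pt. snd (snd a) + snd (snd x)) has_derivative (\<lambda>d. snd (snd d))) (at x)"
    by (rule derivative_eq_intros refl | simp)+
  show ?thesis unfolding dr_mult_eq
    by (rule has_derivative_Pair[OF c1 has_derivative_Pair[OF c2 c3]])
qed

lemma Linv_deriv:
  fixes br :: "'v::euclidean_space \<Rightarrow> 'v \<Rightarrow> 'z::euclidean_space"
  assumes bl: "bilinear br"
  shows "frechet_derivative (dr_mult br (dr_inv p)) (at p) = Nm br p"
proof -
  obtain V Z t where p: "p = (V, Z, t)" by (cases p) auto
  have x: "exp (- (t / 2)) * exp (- (t / 2)) = exp (- t)"
    by (simp add: exp_add[symmetric])
  have e: "(exp (- (t / 2)) / 2) *\<^sub>R br (- (exp (- (t / 2)) *\<^sub>R V)) w = - ((exp (- t) / 2) *\<^sub>R br V w)" for w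
    using x by (simp add: bilinear_lmul[OF bl] bilinear_lneg[OF bl])
  show ?thesis
    unfolding frechet_derivative_at[OF dr_mult_deriv[OF bl, of "dr_inv p" p], symmetric]
    unfolding p by (simp add: dr_inv_def Nm_def fun_eq_iff e algebra_simps)
qed

lemma metric_eq:
  fixes br :: "'v::euclidean_space \<Rightarrow> 'v \<Rightarrow> 'z::euclidean_space"
  assumes bl: "bilinear br"
  shows "dr_metric br q u w = inner (Nm br q u) (Nm br q w)"
  unfolding dr_metric_def Linv_deriv[OF bl] s_inner_eq ..

lemma fv_deriv:
  fixes br :: "'v::euclidean_space \<Rightarrow> 'v \<Rightarrow> 'z::euclidean_space" and \<xi> :: "('v,'z) pt \<Rightarrow> ('v,'z) pt"
  assumes bl: "bilinear br" and xi: "(\<xi> has_derivative D\<xi>) (at p)"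
  shows "((\<lambda>q. Nm br q (\<xi> q)) has_derivative (\<lambda>d. DNm br p d (\<xi> p) + Nm br p (D\<xi> d))) (at p)"
proof -
  have bb: "bounded_bilinear br" using bl bilinear_conv_bounded_bilinear by blast
  have x1: "((\<lambda>q. fst (\<xi> q)) has_derivative (\<lambda>d. fst (D\<xi> d))) (at p)"
    using has_derivative_fst[OF xi] .
  have x2: "((\<lambda>q. fst (snd (\<xi> q))) has_derivative (\<lambda>d. fst (snd (D\<xi> d)))) (at p)"
    using has_derivative_fst[OF has_derivative_snd[OF xi]] .
  have x3: "((\<lambda>q. snd (snd (\<xi> q))) has_derivative (\<lambda>d. snd (snd (D\<xi> d)))) (at p)"
    using has_derivative_snd[OF has_derivative_snd[OF xi]] .
  have fq: "((\<lambda>q::('v,'z) pt. fst q) has_derivative (\<lambda>d. fst d)) (at p)"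
    by (rule has_derivative_fst[OF has_derivative_ident])
  have t: "((\<lambda>q::('v,'z) pt. snd (snd q)) has_derivative (\<lambda>d. snd (snd d))) (at p)"
    by (rule derivative_eq_intros refl)+
  have bq: "((\<lambda>q. br (fst q) (fst (\<xi> q))) has_derivative (\<lambda>d. br (fst p) (fst (D\<xi> d)) + br (fst d) (fst (\<xi> p)))) (at p)"
    by (rule bounded_bilinear.FDERIV[OF bb fq x1])
  have c1: "((\<lambda>q. exp (- snd (snd q) / 2) *\<^sub>R fst (\<xi> q)) has_derivative
      (\<lambda>d. (- snd (snd d) / 2 * exp (- snd (snd p) / 2)) *\<^sub>R fst (\<xi> p) + exp (- snd (snd p) / 2) *\<^sub>R fst (D\<xi> d))) (at p)"
    by (rule derivative_eq_intros t x1 refl | simp add: fun_eq_iff algebra_simps)+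
  have c2: "((\<lambda>q. exp (- snd (snd q)) *\<^sub>R (fst (snd (\<xi> q)) - (1/2) *\<^sub>R br (fst q) (fst (\<xi> q)))) has_derivative
      (\<lambda>d. (- snd (snd d) * exp (- snd (snd p))) *\<^sub>R (fst (snd (\<xi> p)) - (1/2) *\<^sub>R br (fst p) (fst (\<xi> p)))
          + exp (- snd (snd p)) *\<^sub>R (fst (snd (D\<xi> d)) - (1/2) *\<^sub>R (br (fst p) (fst (D\<xi> d)) + br (fst d) (fst (\<xi> p)))))) (at p)"
    by (rule derivative_eq_intros t x2 bq refl | simp add: fun_eq_iff algebra_simps)+
  have e: "(\<lambda>q. Nm br q (\<xi> q)) = (\<lambda>q. (exp (- snd (snd q) / 2) *\<^sub>R fst (\<xi> q),
       exp (- snd (snd q)) *\<^sub>R (fst (snd (\<xi> q)) - (1/2) *\<^sub>R br (fst q) (fst (\<xi> q))), snd (snd (\<xi> q))))"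
    by (simp add: Nm_def)
  show ?thesis unfolding e
    by (rule has_derivative_eq_rhs[OF has_derivative_Pair[OF c1 has_derivative_Pair[OF c2 x3]]])
       (simp add: fun_eq_iff Nm_def DNm_def algebra_simps)
qed

lemma Nm_deriv:
  fixes br :: "'v::euclidean_space \<Rightarrow> 'v \<Rightarrow> 'z::euclidean_space"
  assumes bl: "bilinear br"
  shows "((\<lambda>q. Nm br q u) has_derivative (\<lambda>d. DNm br p d u)) (at p)"
proof -
  have "Nm br p 0 = 0" by (simp add: Nm_def bilinear_rzero[OF bl] zero_prod_def)
  then show ?thesis using fv_deriv[OF bl has_derivative_const[of u "at p"]] by simp
qed

lemma metric_deriv:
  fixes br :: "'v::euclidean_space \<Rightarrow> 'v \<Rightarrow> 'z::euclidean_space"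
  assumes bl: "bilinear br"
  shows "frechet_derivative (\<lambda>q. dr_metric br q u w) (at p) d
       = inner (DNm br p d u) (Nm br p w) + inner (Nm br p u) (DNm br p d w)"
proof -
  have "((\<lambda>q. dr_metric br q u w) has_derivative (\<lambda>d. inner (Nm br p u) (DNm br p d w) + inner (DNm br p d u) (Nm br p w))) (at p)"
    unfolding metric_eq[OF bl]
    by (rule has_derivative_inner[OF Nm_deriv[OF bl] Nm_deriv[OF bl]])
  from frechet_derivative_at[OF this, symmetric] show ?thesis by simp
qed

lemma exp_subst:
  fixes t :: real
  obtains E where "E > 0" "exp (t / 2) = E" "exp t = E * E" "exp (- (t / 2)) = 1 / E" "exp (- t) = 1 / (E * E)"
    "exp (- t / 2) = 1 / E"
proof
  show "exp (t / 2) > 0" by simp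
  show "exp t = exp (t / 2) * exp (t / 2)" by (simp add: exp_add[symmetric])
  then show "exp (- t) = 1 / (exp (t / 2) * exp (t / 2))" by (simp add: exp_minus field_simps)
  show "exp (- (t / 2)) = 1 / exp (t / 2)" by (simp add: exp_minus field_simps)
  then show "exp (- t / 2) = 1 / exp (t / 2)" by simp
qed simp

lemma Nm_Ef:
  fixes br :: "'v::euclidean_space \<Rightarrow> 'v \<Rightarrow> 'z::euclidean_space"
  assumes bl: "bilinear br"
  shows "Nm br p (Ef br P p) = P"
proof -
  obtain V Z t where p: "p = (V, Z, t)" by (cases p) auto
  obtain P1 P2 P3 where P: "P = (P1, P2, P3)" by (cases P) auto
  obtain E where E: "E > 0" "exp (t / 2) = E" "exp t = E * E" "exp (- (t / 2)) = 1 / E" "exp (- t) = 1 / (E * E)" "exp (- t / 2) = 1 / E"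
    by (rule exp_subst)
  show ?thesis unfolding p P Nm_def Ef_def
    using E(1) by (simp add: E(2-6) bilinear_rmul[OF bl] algebra_simps)
qed

lemma MC:
  fixes br :: "'v::euclidean_space \<Rightarrow> 'v \<Rightarrow> 'z::euclidean_space"
  assumes bl: "bilinear br" and sk: "\<And>a b. br a b = - br b a"
  shows "DNm br p x (Ef br P p) - DNm br p (Ef br P p) x = brk br P (Nm br p x)"
proof -
  obtain V Z t where p: "p = (V, Z, t)" by (cases p) auto
  obtain P1 P2 P3 where P: "P = (P1, P2, P3)" by (cases P) auto
  obtain x1 x2 x3 where x: "x = (x1, x2, x3)" by (cases x) auto
  obtain E where E: "E > 0" "exp (t / 2) = E" "exp t = E * E" "exp (- (t / 2)) = 1 / E" "exp (- t) = 1 / (E * E)" "exp (- t / 2) = 1 / E"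
    by (rule exp_subst)
  have s: "br x1 P1 = - br P1 x1" by (rule sk)
  show ?thesis unfolding p P x Nm_def Ef_def DNm_def brk_def
    using E(1) by (simp add: E(2-6) bilinear_rmul[OF bl] bilinear_lmul[OF bl] bilinear_rsub[OF bl] s algebra_simps; simp only: scaleR_add_left[symmetric]; simp)
qed

lemma fQ_ED:
  fixes br :: "'v::euclidean_space \<Rightarrow> 'v \<Rightarrow> 'z::euclidean_space" and \<xi> :: "('v,'z) pt \<Rightarrow> ('v,'z) pt"
  assumes bl: "bilinear br" and xi: "smooth_map \<xi>"
  shows "ED br P (\<lambda>q. inner (Nm br q (\<xi> q)) Q) p
     = inner (DNm br p (Ef br P p) (\<xi> p) + Nm br p (frechet_derivative \<xi> (at p) (Ef br P p))) Q"
proof -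
  have "((\<lambda>q. inner (Nm br q (\<xi> q)) Q) has_derivative
      (\<lambda>d. inner (DNm br p d (\<xi> p) + Nm br p (frechet_derivative \<xi> (at p) d)) Q)) (at p)"
    by (rule has_derivative_inner_left[OF fv_deriv[OF bl smooth_has_derivative[OF xi]]])
  from frechet_derivative_at[OF this, symmetric] show ?thesis unfolding ED_def by simp
qed

lemma frame_eq:
  fixes br :: "'v::euclidean_space \<Rightarrow> 'v \<Rightarrow> 'z::euclidean_space" and \<xi> :: "('v,'z) pt \<Rightarrow> ('v,'z) pt"
  assumes bl: "bilinear br" and sk: "\<And>a b. br a b = - br b a" and xi: "smooth_map \<xi>"
    and conf: "\<forall>p u w. lie_deriv_metric (dr_metric br) \<xi> p u w = 2 * \<rho> p * dr_metric br p u w"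
  shows "ED br P (\<lambda>q. inner (Nm br q (\<xi> q)) Q) p + ED br Q (\<lambda>q. inner (Nm br q (\<xi> q)) P) p
      + inner (brk br P (Nm br p (\<xi> p))) Q + inner P (brk br Q (Nm br p (\<xi> p))) = 2 * \<rho> p * inner P Q"
proof -
  define u where "u = Ef br P p"
  define w where "w = Ef br Q p"
  define D where "D = frechet_derivative \<xi> (at p)"
  define x where "x = \<xi> p"
  have Pu: "Nm br p u = P" unfolding u_def by (rule Nm_Ef[OF bl])
  have Qw: "Nm br p w = Q" unfolding w_def by (rule Nm_Ef[OF bl])
  have c: "lie_deriv_metric (dr_metric br) \<xi> p u w = 2 * \<rho> p * dr_metric br p u w" using conf by blast
  have c2: "inner (DNm br p x u) Q + inner P (DNm br p x w) + inner (Nm br p (D u)) Q + inner P (Nm br p (D w))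
      = 2 * \<rho> p * inner P Q"
    using c unfolding lie_deriv_metric_def metric_deriv[OF bl] unfolding metric_eq[OF bl] Pu Qw D_def x_def .
  have m1: "DNm br p x u = DNm br p u x + brk br P (Nm br p x)"
    using MC[OF bl sk, of p x P] unfolding u_def by (simp add: algebra_simps)
  have m2: "DNm br p x w = DNm br p w x + brk br Q (Nm br p x)"
    using MC[OF bl sk, of p x Q] unfolding w_def by (simp add: algebra_simps)
  have e1: "ED br P (\<lambda>q. inner (Nm br q (\<xi> q)) Q) p = inner (DNm br p u x + Nm br p (D u)) Q"
    unfolding fQ_ED[OF bl xi] u_def D_def x_def ..
  have e2: "ED br Q (\<lambda>q. inner (Nm br q (\<xi> q)) P) p = inner (DNm br p w x + Nm br p (D w)) P"
    unfolding fQ_ED[OF bl xi] w_def D_def x_def ..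
  show ?thesis
    unfolding e1 e2 x_def[symmetric] using c2 unfolding m1 m2
    by (simp add: inner_add_left inner_add_right inner_commute algebra_simps)
qed



lemma J_inner:
  fixes br :: "'v::euclidean_space \<Rightarrow> 'v \<Rightarrow> 'z::euclidean_space"
  assumes bl: "bilinear br"
  shows "inner (heisJ br Z V) W = inner Z (br V W)"
proof -
  have lin: "linear (\<lambda>w. inner Z (br V w))"
    using bl unfolding bilinear_def
    by (intro linear_compose[of "\<lambda>w. br V w" "\<lambda>x. inner Z x", unfolded o_def]) (auto simp: linear_iff inner_add_right)
  have "inner Z (br V W) = inner Z (br V (\<Sum>b\<in>Basis. (W \<bullet> b) *\<^sub>R b))"
    by (simp add: euclidean_representation)
  also have "\<dots> = (\<Sum>b\<in>Basis. (W \<bullet> b) * inner Z (br V b))"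
    using linear_sum[OF lin, of "\<lambda>b. (W \<bullet> b) *\<^sub>R b" Basis] linear_scale[OF lin] by simp
  finally show ?thesis
    by (simp add: heisJ_def inner_sum_right inner_commute mult.commute)
qed

lemma J_skew:
  fixes br :: "'v::euclidean_space \<Rightarrow> 'v \<Rightarrow> 'z::euclidean_space"
  assumes bl: "bilinear br" and sk: "\<And>a b. br a b = - br b a"
  shows "inner (heisJ br Z a) b = - inner a (heisJ br Z b)"
  using J_inner[OF bl, of Z a b] J_inner[OF bl, of Z b a] sk[of a b]
  by (simp add: inner_commute)

lemma J_addZ:
  "heisJ br (Z1 + Z2) V = heisJ br Z1 V + heisJ br Z2 V"
  by (simp add: heisJ_def inner_add_left scaleR_add_left sum.distrib)

lemma J_norm:
  fixes br :: "'v::euclidean_space \<Rightarrow> 'v \<Rightarrow> 'z::euclidean_space"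
  assumes gh: "gen_heisenberg br" and x: "inner x0 x0 = 1"
  shows "inner (heisJ br Z x0) (heisJ br Z x0) = inner Z Z"
proof -
  have bl: "bilinear br" and sk: "\<And>a b. br a b = - br b a" using gh unfolding gen_heisenberg_def by blast+
  have JJ: "heisJ br Z (heisJ br Z x0) = - ((norm Z)\<^sup>2) *\<^sub>R x0" using gh unfolding gen_heisenberg_def by blast
  have "inner (heisJ br Z x0) (heisJ br Z x0) = - inner x0 (heisJ br Z (heisJ br Z x0))"
    by (rule J_skew[OF bl sk])
  also have "\<dots> = (norm Z)\<^sup>2" unfolding JJ using x by simp
  finally show ?thesis by (simp add: power2_norm_eq_inner)
qed

lemma vec_eq_inner:
  fixes a b :: "'a::real_inner"
  assumes "\<And>z. inner z a = inner z b"
  shows "a = b"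
proof -
  have "inner (a - b) (a - b) = 0" using assms[of "a - b"] by (simp add: inner_diff_right)
  then show ?thesis by simp
qed

lemma heis_facts:
  fixes br :: "'v::euclidean_space \<Rightarrow> 'v \<Rightarrow> 'z::euclidean_space"
  assumes gh: "gen_heisenberg br" and x: "inner x0 x0 = 1" and z: "inner z0 z0 = 1"
  defines "y0 \<equiv> heisJ br z0 x0"
  shows "inner x0 y0 = 0" "inner y0 y0 = 1" "br x0 y0 = z0"
    "heisJ br z0 y0 = - x0"
proof -
  have bl: "bilinear br" and sk: "\<And>a b. br a b = - br b a" using gh unfolding gen_heisenberg_def by blast+
  have br0: "br a a = 0" for a
  proof -
    have "br a a + br a a = 0" using sk[of a a] by (metis add.right_inverse)
    then have "(2::real) *\<^sub>R br a a = 0" by (simp add: scaleR_2)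
    then show ?thesis by simp
  qed
  show "inner x0 y0 = 0"
    unfolding y0_def using J_inner[OF bl, of z0 x0 x0] br0 by (simp add: inner_commute)
  show "inner y0 y0 = 1" unfolding y0_def using J_norm[OF gh x] z by simp
  have nz: "norm z0 = 1" using z by (simp add: norm_eq_sqrt_inner)
  have JJ: "heisJ br z0 (heisJ br z0 x0) = - ((norm z0)\<^sup>2) *\<^sub>R x0" using gh unfolding gen_heisenberg_def by blast
  show "heisJ br z0 y0 = - x0" unfolding y0_def JJ nz by simp
  show "br x0 y0 = z0"
  proof (rule vec_eq_inner)
    fix Z
    have "inner (heisJ br (Z + z0) x0) (heisJ br (Z + z0) x0) = inner (Z + z0) (Z + z0)"
      by (rule J_norm[OF gh x])
    then have "inner (heisJ br Z x0) (heisJ br Z x0) + 2 * inner (heisJ br Z x0) (heisJ br z0 x0) + inner (heisJ br z0 x0) (heisJ br z0 x0)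
        = inner Z Z + 2 * inner Z z0 + inner z0 z0"
      unfolding J_addZ by (simp add: inner_add_left inner_add_right inner_commute)
    then have "inner (heisJ br Z x0) (heisJ br z0 x0) = inner Z z0"
      using J_norm[OF gh x, of Z] J_norm[OF gh x, of z0] by simp
    then show "inner Z (br x0 y0) = inner Z z0"
      unfolding y0_def J_inner[OF bl, symmetric] .
  qed
qed



lemma smooth_fc:
  fixes br :: "'v::euclidean_space \<Rightarrow> 'v \<Rightarrow> 'z::euclidean_space" and \<xi> :: "('v,'z) pt \<Rightarrow> ('v,'z) pt"
  assumes bl: "bilinear br" and xi: "smooth_map \<xi>"
  shows "smooth_map (\<lambda>q. inner (Nm br q (\<xi> q)) Q)"
proof -
  have T: "linear (\<lambda>q::('v,'z) pt. - snd (snd q) / 2)" "linear (\<lambda>q::('v,'z) pt. - snd (snd q))"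
    by (simp_all add: linear_iff field_simps)
  have L1: "linear (\<lambda>u::('v,'z) pt. fst u \<bullet> c)" "linear (\<lambda>u::('v,'z) pt. fst (snd u) \<bullet> d)"
     "linear (\<lambda>u::('v,'z) pt. snd (snd u) * r)" for c d r
    by (simp_all add: linear_iff inner_add_left algebra_simps)
  have L2: "linear (\<lambda>u::('v,'z) pt. br b (fst u) \<bullet> c)" for b c
  proof -
    have "linear (\<lambda>u::('v,'z) pt. br b (fst u))"
      using has_derivative_linear[OF br_snd_deriv[OF bl]] by simp
    then show ?thesis
      by (rule linear_compose[of _ "\<lambda>x. x \<bullet> c", unfolded o_def]) (simp add: linear_iff inner_add_left)
  qed
  have brsum: "br (fst q) (fst (\<xi> q)) \<bullet> c = (\<Sum>b\<in>Basis. (fst q \<bullet> b) * (br b (fst (\<xi> q)) \<bullet> c))" for q c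
  proof -
    have "br (fst q) (fst (\<xi> q)) = br (\<Sum>b\<in>Basis. (fst q \<bullet> b) *\<^sub>R b) (fst (\<xi> q))"
      by (simp add: euclidean_representation)
    also have "\<dots> = (\<Sum>b\<in>Basis. (fst q \<bullet> b) *\<^sub>R br b (fst (\<xi> q)))"
    proof -
      have lb: "linear (\<lambda>x. br x (fst (\<xi> q)))" using bl unfolding bilinear_def by blast
      from linear_sum[OF lb, of "\<lambda>b. (fst q \<bullet> b) *\<^sub>R b" Basis] show ?thesis by (simp add: linear_scale[OF lb])
    qed
    finally show ?thesis by (simp add: inner_sum_left)
  qed
  have e: "(\<lambda>q. inner (Nm br q (\<xi> q)) Q) = (\<lambda>q. exp (- snd (snd q) / 2) * (fst (\<xi> q) \<bullet> fst Q)
      + exp (- snd (snd q)) * (fst (snd (\<xi> q)) \<bullet> fst (snd Q))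
      - ((1/2) * exp (- snd (snd q))) * (\<Sum>b\<in>Basis. (fst q \<bullet> b) * (br b (fst (\<xi> q)) \<bullet> fst (snd Q)))
      + snd (snd (\<xi> q)) * snd (snd Q))"
    by (simp add: fun_eq_iff Nm_def inner_prod_def brsum[symmetric] inner_diff_left algebra_simps)
  show ?thesis unfolding e
    by (intro smooth_add smooth_minus smooth_mult smooth_exp_lin[where k=1, simplified] smooth_exp_lin T
        smooth_sum finite_Basis smooth_linear L1 smooth_comp_linear[OF xi] L2)
qed

lemma liftE:
  fixes br :: "'v::euclidean_space \<Rightarrow> 'v \<Rightarrow> 'z::euclidean_space"
  assumes bl: "bilinear br" and eq: "(\<lambda>p. A p + B p + c * C p) = (\<lambda>p. k * R p)"
    and sA: "smooth_map A" and sB: "smooth_map B" and sC: "smooth_map C" and sR: "smooth_map R"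
  shows "(\<lambda>p. ED br W A p + ED br W B p + c * ED br W C p) = (\<lambda>p. k * ED br W R p)"
proof
  fix p
  have "ED br W (\<lambda>p. (A p + B p) + c * C p) p = ED br W (\<lambda>p. k * R p) p" unfolding eq ..
  moreover have "ED br W (\<lambda>p. (A p + B p) + c * C p) p = ED br W A p + ED br W B p + c * ED br W C p"
    by (simp add: ED_add ED_cmult sA sB sC smooth_add smooth_cmult)
  moreover have "ED br W (\<lambda>p. k * R p) p = k * ED br W R p" by (simp add: ED_cmult sR)
  ultimately show "ED br W A p + ED br W B p + c * ED br W C p = k * ED br W R p" by simp
qed

lemma comm0:
  fixes br :: "'v::euclidean_space \<Rightarrow> 'v \<Rightarrow> 'z::euclidean_space"
  assumes bl: "bilinear br" and sk: "\<And>a b. br a b = - br b a" and b: "brk br P Q = c *\<^sub>R R" and h: "smooth_map h"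
  shows "ED br P (ED br Q h) p - ED br Q (ED br P h) p = c * ED br R h p"
  using ED_comm[OF bl sk h, of P Q p] unfolding b ED_scaleP[OF bl h] .

lemma comm1:
  fixes br :: "'v::euclidean_space \<Rightarrow> 'v \<Rightarrow> 'z::euclidean_space"
  assumes bl: "bilinear br" and sk: "\<And>a b. br a b = - br b a" and b: "brk br P Q = c *\<^sub>R R" and h: "smooth_map h"
  shows "ED br W (ED br P (ED br Q h)) p - ED br W (ED br Q (ED br P h)) p = c * ED br W (ED br R h) p"
proof -
  have fe: "ED br P (ED br Q h) = (\<lambda>q. ED br Q (ED br P h) q + c * ED br R h q)"
    using comm0[OF bl sk b h] by (auto simp: fun_eq_iff algebra_simps)
  have "ED br W (ED br P (ED br Q h)) p = ED br W (ED br Q (ED br P h)) p + c * ED br W (ED br R h) p"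
    unfolding fe by (simp add: ED_add ED_cmult smooth_ED[OF bl] h smooth_cmult)
  then show ?thesis by simp
qed



lemma rho_zero:
  fixes br :: "'v::euclidean_space \<Rightarrow> 'v \<Rightarrow> 'z::euclidean_space"
    and \<xi> :: "('v,'z) pt \<Rightarrow> ('v,'z) pt" and \<rho> :: "('v,'z) pt \<Rightarrow> real"
    and x0 :: "'v" and z0 :: "'z"
  assumes gh: "gen_heisenberg br" and xi: "smooth_map \<xi>" and rh: "smooth_map \<rho>"
    and conf: "\<forall>p u w. lie_deriv_metric (dr_metric br) \<xi> p u w = 2 * \<rho> p * dr_metric br p u w"
    and x: "inner x0 x0 = 1" and z: "inner z0 z0 = 1"
  shows "\<rho> p = 0"
proof -
  have bl: "bilinear br" and sk: "\<And>a b. br a b = - br b a" using gh unfolding gen_heisenberg_def by blast+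
  define y0 where "y0 = heisJ br z0 x0"
  have xy: "inner x0 y0 = 0" and yy: "inner y0 y0 = 1" and bxy: "br x0 y0 = z0" and Jy: "heisJ br z0 y0 = - x0"
    using heis_facts[OF gh x z] unfolding y0_def by auto
  have yx: "inner y0 x0 = 0" using xy by (simp add: inner_commute)
  have bx: "inner (br x0 v) z0 = inner y0 v" for v
    using J_inner[OF bl, of z0 x0 v] unfolding y0_def by (simp add: inner_commute)
  have by0: "inner (br y0 v) z0 = - inner x0 v" for v
    using J_inner[OF bl, of z0 y0 v] unfolding Jy by (simp add: inner_commute)
  have bx': "inner z0 (br x0 v) = inner y0 v" "inner z0 (br x0 v) = inner v y0" "inner (br x0 v) z0 = inner v y0" for v
    using bx[of v] by (simp_all add: inner_commute)
  have by0': "inner z0 (br y0 v) = - inner x0 v" "inner z0 (br y0 v) = - inner v x0" "inner (br y0 v) z0 = - inner v x0" for v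
    using by0[of v] by (simp_all add: inner_commute)
  define PA :: "('v,'z) pt" where "PA = (0, 0, 1)"
  define PX :: "('v,'z) pt" where "PX = (x0, 0, 0)"
  define PY :: "('v,'z) pt" where "PY = (y0, 0, 0)"
  define PZ :: "('v,'z) pt" where "PZ = (0, z0, 0)"
  define fA where "fA = (\<lambda>q. inner (Nm br q (\<xi> q)) PA)"
  define fX where "fX = (\<lambda>q. inner (Nm br q (\<xi> q)) PX)"
  define fY where "fY = (\<lambda>q. inner (Nm br q (\<xi> q)) PY)"
  define fZ where "fZ = (\<lambda>q. inner (Nm br q (\<xi> q)) PZ)"
  have sA: "smooth_map fA" unfolding fA_def by (rule smooth_fc[OF bl xi])
  have sX: "smooth_map fX" unfolding fX_def by (rule smooth_fc[OF bl xi])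
  have sY: "smooth_map fY" unfolding fY_def by (rule smooth_fc[OF bl xi])
  have sZ: "smooth_map fZ" unfolding fZ_def by (rule smooth_fc[OF bl xi])
  note FE = frame_eq[OF bl sk xi conf]
  note defs = PA_def PX_def PY_def PZ_def fA_def fX_def fY_def fZ_def brk_def
  note simps = bilinear_lzero[OF bl] bilinear_rzero[OF bl] x z xy yx yy bx by0 bx' by0' inner_commute inner_prod_def fun_eq_iff
  have eqAA: "(\<lambda>p. ED br PA fA p + ED br PA fA p + 0 * fA p) = (\<lambda>p. 2 * \<rho> p)"
    using FE[of PA PA] unfolding defs by (simp add: simps)
  have eqAX: "(\<lambda>p. ED br PA fX p + ED br PX fA p + 1/2 * fX p) = (\<lambda>p. 0 * \<rho> p)"
    using FE[of PA PX] unfolding defs by (simp add: simps)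
  have eqAY: "(\<lambda>p. ED br PA fY p + ED br PY fA p + 1/2 * fY p) = (\<lambda>p. 0 * \<rho> p)"
    using FE[of PA PY] unfolding defs by (simp add: simps)
  have eqAZ: "(\<lambda>p. ED br PA fZ p + ED br PZ fA p + 1 * fZ p) = (\<lambda>p. 0 * \<rho> p)"
    using FE[of PA PZ] unfolding defs by (simp add: simps)
  have eqXX: "(\<lambda>p. ED br PX fX p + ED br PX fX p + -1 * fA p) = (\<lambda>p. 2 * \<rho> p)"
    using FE[of PX PX] unfolding defs by (simp add: simps)
  have eqXY: "(\<lambda>p. ED br PX fY p + ED br PY fX p + 0 * fA p) = (\<lambda>p. 0 * \<rho> p)"
    using FE[of PX PY] unfolding defs by (simp add: simps)
  have eqXZ: "(\<lambda>p. ED br PX fZ p + ED br PZ fX p + 1 * fY p) = (\<lambda>p. 0 * \<rho> p)"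
    using FE[of PX PZ] unfolding defs by (simp add: simps)
  have eqYY: "(\<lambda>p. ED br PY fY p + ED br PY fY p + -1 * fA p) = (\<lambda>p. 2 * \<rho> p)"
    using FE[of PY PY] unfolding defs by (simp add: simps)
  have eqYZ: "(\<lambda>p. ED br PY fZ p + ED br PZ fY p + -1 * fX p) = (\<lambda>p. 0 * \<rho> p)"
    using FE[of PY PZ] unfolding defs by (simp add: simps)
  have eqZZ: "(\<lambda>p. ED br PZ fZ p + ED br PZ fZ p + -2 * fA p) = (\<lambda>p. 2 * \<rho> p)"
    using FE[of PZ PZ] unfolding defs by (simp add: simps)
  have bAX: "brk br PA PX = (1/2) *\<^sub>R PX" unfolding defs by (simp add: simps)
  have bAY: "brk br PA PY = (1/2) *\<^sub>R PY" unfolding defs by (simp add: simps)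
  have bAZ: "brk br PA PZ = 1 *\<^sub>R PZ" unfolding defs by (simp add: simps)
  have bXY: "brk br PX PY = 1 *\<^sub>R PZ" unfolding defs by (simp add: simps bxy)
  have bXZ: "brk br PX PZ = 0 *\<^sub>R PA" unfolding defs by (simp add: simps zero_prod_def)
  have bYZ: "brk br PY PZ = 0 *\<^sub>R PA" unfolding defs by (simp add: simps zero_prod_def)
  note i0 = fun_cong[OF eqAA, of p]
  note i1 = fun_cong[OF eqXX, of p]
  note i2 = fun_cong[OF eqYY, of p]
  note i3 = fun_cong[OF eqZZ, of p]
  note i4 = fun_cong[OF liftE[OF bl eqXX smooth_ED[OF bl sX, where P=PX] smooth_ED[OF bl sX, where P=PX] sA rh, where W=PA], of p]
  note i5 = fun_cong[OF liftE[OF bl eqZZ smooth_ED[OF bl sZ, where P=PZ] smooth_ED[OF bl sZ, where P=PZ] sA rh, where W=PA], of p]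
  note i6 = fun_cong[OF liftE[OF bl eqYZ smooth_ED[OF bl sZ, where P=PY] smooth_ED[OF bl sY, where P=PZ] sX rh, where W=PX], of p]
  note i7 = fun_cong[OF liftE[OF bl eqXZ smooth_ED[OF bl sZ, where P=PX] smooth_ED[OF bl sX, where P=PZ] sY rh, where W=PY], of p]
  note i8 = fun_cong[OF liftE[OF bl eqAZ smooth_ED[OF bl sZ, where P=PA] smooth_ED[OF bl sA, where P=PZ] sZ rh, where W=PZ], of p]
  note i9 = fun_cong[OF liftE[OF bl eqXY smooth_ED[OF bl sY, where P=PX] smooth_ED[OF bl sX, where P=PY] sA rh, where W=PZ], of p]
  note i10 = fun_cong[OF liftE[OF bl liftE[OF bl eqYZ smooth_ED[OF bl sZ, where P=PY] smooth_ED[OF bl sY, where P=PZ] sX rh, where W=PX] smooth_ED[OF bl smooth_ED[OF bl sZ, where P=PY], where P=PX] smooth_ED[OF bl smooth_ED[OF bl sY, where P=PZ], where P=PX] smooth_ED[OF bl sX, where P=PX] smooth_ED[OF bl rh, where P=PX], where W=PA], of p]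
  note i11 = fun_cong[OF liftE[OF bl liftE[OF bl eqXY smooth_ED[OF bl sY, where P=PX] smooth_ED[OF bl sX, where P=PY] sA rh, where W=PZ] smooth_ED[OF bl smooth_ED[OF bl sY, where P=PX], where P=PZ] smooth_ED[OF bl smooth_ED[OF bl sX, where P=PY], where P=PZ] smooth_ED[OF bl sA, where P=PZ] smooth_ED[OF bl rh, where P=PZ], where W=PA], of p]
  note i12 = fun_cong[OF liftE[OF bl liftE[OF bl eqAZ smooth_ED[OF bl sZ, where P=PA] smooth_ED[OF bl sA, where P=PZ] sZ rh, where W=PY] smooth_ED[OF bl smooth_ED[OF bl sZ, where P=PA], where P=PY] smooth_ED[OF bl smooth_ED[OF bl sA, where P=PZ], where P=PY] smooth_ED[OF bl sZ, where P=PY] smooth_ED[OF bl rh, where P=PY], where W=PX], of p]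
  note i13 = fun_cong[OF liftE[OF bl liftE[OF bl eqAX smooth_ED[OF bl sX, where P=PA] smooth_ED[OF bl sA, where P=PX] sX rh, where W=PZ] smooth_ED[OF bl smooth_ED[OF bl sX, where P=PA], where P=PZ] smooth_ED[OF bl smooth_ED[OF bl sA, where P=PX], where P=PZ] smooth_ED[OF bl sX, where P=PZ] smooth_ED[OF bl rh, where P=PZ], where W=PY], of p]
  note c0 = comm0[OF bl sk bAX smooth_ED[OF bl sZ, where P=PY], where p=p]
  note c1 = comm0[OF bl sk bAY smooth_ED[OF bl sX, where P=PZ], where p=p]
  note c2 = comm0[OF bl sk bAZ sZ, where p=p]
  note c3 = comm0[OF bl sk bXY sZ, where p=p]
  note c4 = comm0[OF bl sk bXY smooth_ED[OF bl sA, where P=PZ], where p=p]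
  note c5 = comm0[OF bl sk bXZ sY, where p=p]
  note c6 = comm0[OF bl sk bYZ sX, where p=p]
  note c7 = comm1[OF bl sk bXZ sY, where p=p and W=PA]
  note c8 = comm1[OF bl sk bYZ sX, where p=p and W=PA]
  note c9 = comm1[OF bl sk bAY sZ, where p=p and W=PX]
  note c10 = comm1[OF bl sk bAZ sX, where p=p and W=PY]
  note c11 = comm1[OF bl sk bXZ sA, where p=p and W=PY]
  from i0 i1 i2 i3 i4 i5 i6 i7 i8 i9 i10 i11 i12 i13 c0 c1 c2 c3 c4 c5 c6 c7 c8 c9 c10 c11 show "\<rho> p = 0" by linarith
qed


theorem theorem1p1:
  fixes br :: "'v::euclidean_space \<Rightarrow> 'v \<Rightarrow> 'z::euclidean_space"
    and \<xi> :: "'v \<times> 'z \<times> real \<Rightarrow> 'v \<times> 'z \<times> real"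
    and \<rho> :: "'v \<times> 'z \<times> real \<Rightarrow> real"
  assumes "gen_heisenberg br"
    and "smooth_map \<xi>"
    and "smooth_map \<rho>"
    and "\<forall>p u w. lie_deriv_metric (dr_metric br) \<xi> p u w = 2 * \<rho> p * dr_metric br p u w"
  shows "\<forall>p. \<rho> p = 0"
proof
  fix p
  obtain x0 :: 'v where x0: "x0 \<in> Basis" using nonempty_Basis by blast
  obtain z0 :: 'z where z0: "z0 \<in> Basis" using nonempty_Basis by blast
  have x: "inner x0 x0 = 1" using x0 by simp
  have z: "inner z0 z0 = 1" using z0 by simp
  show "\<rho> p = 0" by (rule rho_zero[OF assms x z])
qed

end
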